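(* Let $P:\mathcal{C}^{\mathrm{op}}\to\mathbf{Hey}$ be a Gödel hyperdoctrine. Let $A,B$ be objects of $\mathcal{C}$, let $\beta_D\in P(A)$ be a quantifier-free predicate and let $\alpha\in P(A\times B)$ be an existential-free predicate. If \[ a:A\;|\;\top\vdash(\forall b.\alpha(a,b))\rightarrow\beta_D(a),\] then \[ a:A\;|\;\top\vdash\exists b.(\alpha(a,b)\rightarrow\beta_D(a)).\]
   Context: A hyperdoctrine is a functor $P:\mathcal{C}^{\mathrm{op}}\to\mathbf{Hey}$ from a cartesian closed category $\mathcal{C}$ to Heyting algebras such that each $P_f$ has a left adjoint $\exists_f$ and a right adjoint $\forall_f$ satisfying Beck–Chevalley. A Gödel hyperdoctrine is a hyperdoctrine which (as a functor to $\mathbf{Pos}$) is a Gödel doctrine. A doctrine $P:\mathcal{C}^{\mathrm{op}}\to\mathbf{Pos}$ ($\mathcal{C}$ with finite products) is existential/universal if reindexing along each product projection $\pi$ has a left adjoint $\exists_\pi$ / right adjoint $\forall_\pi$ satisfying Beck–Chevalley along pullbacks of projections. Notation: $a:A\;|\;\phi\vdash\psi$ means $\phi\le\psi$ in $P(A)$; $\exists b.\psi(a,b)=\exists_{\pi_A}\psi$, $\forall b.\psi(a,b)=\forall_{\pi_A}\psi$; $\top,\rightarrow$ are Heyting operations; substitution is reindexing. In an existential doctrine, $\alpha\in P(I)$ is existential-free if for every $f:A\to I$, every $B$ and every $\beta\in P(A\times B)$ with $P_f\alpha\le\exists_{\pi_A}\beta$ there is $g:A\to B$ with $P_f\alpha\le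 P_{\langle1_A,g\rangle}\beta$. In a universal doctrine $Q$, $\alpha\in Q(I)$ is universal-free if for every $f:A\to I$, every $B$ and every $\beta\in Q(A\times B)$ with $\forall_{\pi_A}\beta\le Q_f\alpha$ there is $g:A\to B$ with $Q_{\langle1_A,g\rangle}\beta\le Q_f\alpha$. Enough existential-free (universal-free) predicates: every $\alpha\in P(I)$ equals $\exists_{\pi_I}\beta$ (resp. $\forall_{\pi_I}\beta$) for some $A$ and existential-free (universal-free) $\beta\in P(I\times A)$. A Gödel doctrine: (1) $\mathcal{C}$ cartesian closed; (2) $P$ existential and universal; (3) $P$ has enough existential-free predicates; (4) existential-free predicates are stable under $\forall_\pi$ for projections $\pi$; (5) the sub-doctrine $P'$ of existential-free predicates (a universal doctrine) has enough universal-free predicates. A predicate is quantifier-free if it is existential-free in $P$ and universal-free in $P'$. *)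

theory Defs
  imports Main
begin

text \<open>Objects form the type 'o, arrows the type 'm. Composition Comp g f is g after f.
  Products A x B are chosen (Prod, Pi1, Pi2), with a chosen terminal object Term.\<close>

record ('o, 'm) cat =
  Dom  :: "'m \<Rightarrow> 'o"
  Cod  :: "'m \<Rightarrow> 'o"
  Comp :: "'m \<Rightarrow> 'm \<Rightarrow> 'm"
  Id   :: "'o \<Rightarrow> 'm"
  Prod :: "'o \<Rightarrow> 'o \<Rightarrow> 'o"
  Pi1  :: "'o \<Rightarrow> 'o \<Rightarrow> 'm"
  Pi2  :: "'o \<Rightarrow> 'o \<Rightarrow> 'm"
  Term :: "'o"

definition arr :: "('o, 'm, 'x) cat_scheme \<Rightarrow> 'm \<Rightarrow> 'o \<Rightarrow> 'o \<Rightarrow> bool" where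
  "arr C f X Y \<longleftrightarrow> Dom C f = X \<and> Cod C f = Y"

definition category :: "('o, 'm, 'x) cat_scheme \<Rightarrow> bool" where
  "category C \<longleftrightarrow>
     (\<forall>A. arr C (Id C A) A A) \<and>
     (\<forall>f g. Cod C f = Dom C g \<longrightarrow> arr C (Comp C g f) (Dom C f) (Cod C g)) \<and>
     (\<forall>f. Comp C f (Id C (Dom C f)) = f \<and> Comp C (Id C (Cod C f)) f = f) \<and>
     (\<forall>f g h. Cod C f = Dom C g \<longrightarrow> Cod C g = Dom C h \<longrightarrow>
        Comp C h (Comp C g f) = Comp C (Comp C h g) f)"

definition has_finite_products :: "('o, 'm, 'x) cat_scheme \<Rightarrow> bool" where
  "has_finite_products C \<longleftrightarrow>
     (\<forall>A. \<exists>!t. arr C t A (Term C)) \<and>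
     (\<forall>A B. arr C (Pi1 C A B) (Prod C A B) A \<and> arr C (Pi2 C A B) (Prod C A B) B \<and>
        (\<forall>X f g. arr C f X A \<longrightarrow> arr C g X B \<longrightarrow>
           (\<exists>!h. arr C h X (Prod C A B) \<and> Comp C (Pi1 C A B) h = f \<and> Comp C (Pi2 C A B) h = g)))"

definition pair :: "('o, 'm, 'x) cat_scheme \<Rightarrow> 'm \<Rightarrow> 'm \<Rightarrow> 'm" where
  "pair C f g = (THE h. arr C h (Dom C f) (Prod C (Cod C f) (Cod C g)) \<and>
       Comp C (Pi1 C (Cod C f) (Cod C g)) h = f \<and> Comp C (Pi2 C (Cod C f) (Cod C g)) h = g)"

definition cartesian_closed :: "('o, 'm, 'x) cat_scheme \<Rightarrow> bool" where
  "cartesian_closed C \<longleftrightarrow> category C \<and> has_finite_products C \<and>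
     (\<forall>A B. \<exists>E ev. arr C ev (Prod C E A) B \<and>
        (\<forall>X f. arr C f (Prod C X A) B \<longrightarrow>
           (\<exists>!g. arr C g X E \<and>
              Comp C ev (pair C (Comp C g (Pi1 C X A)) (Pi2 C X A)) = f)))"

definition pullback :: "('o, 'm, 'x) cat_scheme \<Rightarrow> 'm \<Rightarrow> 'm \<Rightarrow> 'm \<Rightarrow> 'm \<Rightarrow> bool" where
  "pullback C f g p q \<longleftrightarrow>
     Cod C f = Cod C g \<and> Dom C p = Dom C q \<and> Cod C p = Dom C f \<and> Cod C q = Dom C g \<and>
     Comp C f p = Comp C g q \<and>
     (\<forall>u v. Dom C u = Dom C v \<longrightarrow> Cod C u = Dom C f \<longrightarrow> Cod C v = Dom C g \<longrightarrow>
        Comp C f u = Comp C g v \<longrightarrow>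
        (\<exists>!h. arr C h (Dom C u) (Dom C p) \<and> Comp C p h = u \<and> Comp C q h = v))"

text \<open>Pred A is the fibre P(A); Le A its order; Re f is reindexing P_f : P(Cod f) \<rightarrow> P(Dom f);
  Top, Bot, Meet, Join, Imp are the Heyting operations of each fibre; Ex f and All f are
  the left and right adjoints of Re f.\<close>

record ('o, 'm, 'p) hdoc =
  Pred :: "'o \<Rightarrow> 'p set"
  Le   :: "'o \<Rightarrow> 'p \<Rightarrow> 'p \<Rightarrow> bool"
  Re   :: "'m \<Rightarrow> 'p \<Rightarrow> 'p"
  Top  :: "'o \<Rightarrow> 'p"
  Bot  :: "'o \<Rightarrow> 'p"
  Meet :: "'o \<Rightarrow> 'p \<Rightarrow> 'p \<Rightarrow> 'p"
  Join :: "'o \<Rightarrow> 'p \<Rightarrow> 'p \<Rightarrow> 'p"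
  Imp  :: "'o \<Rightarrow> 'p \<Rightarrow> 'p \<Rightarrow> 'p"
  Ex   :: "'m \<Rightarrow> 'p \<Rightarrow> 'p"
  All  :: "'m \<Rightarrow> 'p \<Rightarrow> 'p"

definition heyting_fibre :: "('o, 'm, 'p, 'x) hdoc_scheme \<Rightarrow> 'o \<Rightarrow> bool" where
  "heyting_fibre P A \<longleftrightarrow>
     (\<forall>a\<in>Pred P A. Le P A a a) \<and>
     (\<forall>a\<in>Pred P A. \<forall>b\<in>Pred P A. Le P A a b \<longrightarrow> Le P A b a \<longrightarrow> a = b) \<and>
     (\<forall>a\<in>Pred P A. \<forall>b\<in>Pred P A. \<forall>c\<in>Pred P A. Le P A a b \<longrightarrow> Le P A b c \<longrightarrow> Le P A a c) \<and>
     Top P A \<in> Pred P A \<and> (\<forall>a\<in>Pred P A. Le P A a (Top P A)) \<and>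
     Bot P A \<in> Pred P A \<and> (\<forall>a\<in>Pred P A. Le P A (Bot P A) a) \<and>
     (\<forall>a\<in>Pred P A. \<forall>b\<in>Pred P A.
        Meet P A a b \<in> Pred P A \<and> Join P A a b \<in> Pred P A \<and> Imp P A a b \<in> Pred P A \<and>
        (\<forall>c\<in>Pred P A. Le P A c (Meet P A a b) \<longleftrightarrow> Le P A c a \<and> Le P A c b) \<and>
        (\<forall>c\<in>Pred P A. Le P A (Join P A a b) c \<longleftrightarrow> Le P A a c \<and> Le P A b c) \<and>
        (\<forall>c\<in>Pred P A. Le P A c (Imp P A a b) \<longleftrightarrow> Le P A (Meet P A c a) b))"

definition heyting_functor :: "('o, 'm, 'y) cat_scheme \<Rightarrow> ('o, 'm, 'p, 'x) hdoc_scheme \<Rightarrow> bool" where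
  "heyting_functor C P \<longleftrightarrow>
     (\<forall>A. heyting_fibre P A) \<and>
     (\<forall>A. \<forall>a\<in>Pred P A. Re P (Id C A) a = a) \<and>
     (\<forall>f g. Cod C f = Dom C g \<longrightarrow> (\<forall>a\<in>Pred P (Cod C g).
        Re P (Comp C g f) a = Re P f (Re P g a))) \<and>
     (\<forall>f. let X = Dom C f; Y = Cod C f in
        (\<forall>a\<in>Pred P Y. Re P f a \<in> Pred P X) \<and>
        (\<forall>a\<in>Pred P Y. \<forall>b\<in>Pred P Y. Le P Y a b \<longrightarrow> Le P X (Re P f a) (Re P f b)) \<and>
        Re P f (Top P Y) = Top P X \<and> Re P f (Bot P Y) = Bot P X \<and>
        (\<forall>a\<in>Pred P Y. \<forall>b\<in>Pred P Y.
           Re P f (Meet P Y a b) = Meet P X (Re P f a) (Re P f b) \<and>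
           Re P f (Join P Y a b) = Join P X (Re P f a) (Re P f b) \<and>
           Re P f (Imp P Y a b) = Imp P X (Re P f a) (Re P f b)))"

definition hyperdoctrine :: "('o, 'm, 'y) cat_scheme \<Rightarrow> ('o, 'm, 'p, 'x) hdoc_scheme \<Rightarrow> bool" where
  "hyperdoctrine C P \<longleftrightarrow>
     cartesian_closed C \<and> heyting_functor C P \<and>
     (\<forall>f. let X = Dom C f; Y = Cod C f in
        (\<forall>a\<in>Pred P X. Ex P f a \<in> Pred P Y \<and> All P f a \<in> Pred P Y \<and>
           (\<forall>b\<in>Pred P Y. Le P Y (Ex P f a) b \<longleftrightarrow> Le P X a (Re P f b)) \<and>
           (\<forall>b\<in>Pred P Y. Le P Y b (All P f a) \<longleftrightarrow> Le P X (Re P f b) a))) \<and>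
     (\<forall>f g p q. pullback C f g p q \<longrightarrow> (\<forall>a\<in>Pred P (Dom C f).
        Re P g (Ex P f a) = Ex P q (Re P p a) \<and> Re P g (All P f a) = All P q (Re P p a)))"

definition ex_free :: "('o, 'm, 'y) cat_scheme \<Rightarrow> ('o, 'm, 'p, 'x) hdoc_scheme \<Rightarrow> 'o \<Rightarrow> 'p \<Rightarrow> bool" where
  "ex_free C P I \<alpha> \<longleftrightarrow> \<alpha> \<in> Pred P I \<and>
     (\<forall>A f B \<beta>. arr C f A I \<longrightarrow> \<beta> \<in> Pred P (Prod C A B) \<longrightarrow>
        Le P A (Re P f \<alpha>) (Ex P (Pi1 C A B) \<beta>) \<longrightarrow>
        (\<exists>g. arr C g A B \<and> Le P A (Re P f \<alpha>) (Re P (pair C (Id C A) g) \<beta>)))"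

text \<open>Universal-free in the sub-doctrine P' of existential-free predicates.\<close>
definition univ_free' :: "('o, 'm, 'y) cat_scheme \<Rightarrow> ('o, 'm, 'p, 'x) hdoc_scheme \<Rightarrow> 'o \<Rightarrow> 'p \<Rightarrow> bool" where
  "univ_free' C P I \<alpha> \<longleftrightarrow> ex_free C P I \<alpha> \<and>
     (\<forall>A f B \<beta>. arr C f A I \<longrightarrow> ex_free C P (Prod C A B) \<beta> \<longrightarrow>
        Le P A (All P (Pi1 C A B) \<beta>) (Re P f \<alpha>) \<longrightarrow>
        (\<exists>g. arr C g A B \<and> Le P A (Re P (pair C (Id C A) g) \<beta>) (Re P f \<alpha>)))"

definition quantifier_free :: "('o, 'm, 'y) cat_scheme \<Rightarrow> ('o, 'm, 'p, 'x) hdoc_scheme \<Rightarrow> 'o \<Rightarrow> 'p \<Rightarrow> bool" where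
  "quantifier_free C P I \<alpha> \<longleftrightarrow> ex_free C P I \<alpha> \<and> univ_free' C P I \<alpha>"

text \<open>Goedel hyperdoctrine: conditions (1),(2) follow from being a hyperdoctrine
  (cartesian closed base, adjoints along all arrows, in particular projections, with
  Beck-Chevalley along all pullbacks); (3)-(5) are stated explicitly.\<close>
definition goedel_hyperdoctrine :: "('o, 'm, 'y) cat_scheme \<Rightarrow> ('o, 'm, 'p, 'x) hdoc_scheme \<Rightarrow> bool" where
  "goedel_hyperdoctrine C P \<longleftrightarrow> hyperdoctrine C P \<and>
     (\<forall>I. \<forall>\<alpha>\<in>Pred P I. \<exists>A \<beta>. ex_free C P (Prod C I A) \<beta> \<and> \<alpha> = Ex P (Pi1 C I A) \<beta>) \<and>
     (\<forall>A B \<beta>. ex_free C P (Prod C A B) \<beta> \<longrightarrow> ex_free C P A (All P (Pi1 C A B) \<beta>)) \<and>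
     (\<forall>I \<alpha>. ex_free C P I \<alpha> \<longrightarrow>
        (\<exists>A \<beta>. univ_free' C P (Prod C I A) \<beta> \<and> \<alpha> = All P (Pi1 C I A) \<beta>))"

end

theory Submission
  imports Defs
begin
lemma hf_trans: assumes "heyting_fibre P A" "a \<in> Pred P A" "b \<in> Pred P A" "c \<in> Pred P A" "Le P A a b" "Le P A b c" shows "Le P A a c"
proof -
  have H: "\<forall>a\<in>Pred P A. \<forall>b\<in>Pred P A. \<forall>c\<in>Pred P A. Le P A a b \<longrightarrow> Le P A b c \<longrightarrow> Le P A a c"
    using assms(1) unfolding heyting_fibre_def by (elim conjE) assumption
  show ?thesis using bspec[OF bspec[OF bspec[OF H assms(2)] assms(3)] assms(4)] assms(5,6) by (rule mp[THEN mp])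
qed
lemma hf_refl: "heyting_fibre P A \<Longrightarrow> a \<in> Pred P A \<Longrightarrow> Le P A a a"
  by (simp add: heyting_fibre_def)
lemma hf_top: "heyting_fibre P A \<Longrightarrow> Top P A \<in> Pred P A"
  by (simp add: heyting_fibre_def)
lemma hf_le_top: "heyting_fibre P A \<Longrightarrow> a \<in> Pred P A \<Longrightarrow> Le P A a (Top P A)"
  by (simp add: heyting_fibre_def)
lemma hf_meet: "heyting_fibre P A \<Longrightarrow> a \<in> Pred P A \<Longrightarrow> b \<in> Pred P A \<Longrightarrow> Meet P A a b \<in> Pred P A"
  by (simp add: heyting_fibre_def)
lemma hf_imp: "heyting_fibre P A \<Longrightarrow> a \<in> Pred P A \<Longrightarrow> b \<in> Pred P A \<Longrightarrow> Imp P A a b \<in> Pred P A"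
  by (simp add: heyting_fibre_def)
lemma hf_meet_le: assumes "heyting_fibre P A" "a \<in> Pred P A" "b \<in> Pred P A" "c \<in> Pred P A" shows
   "Le P A c (Meet P A a b) \<longleftrightarrow> Le P A c a \<and> Le P A c b"
proof -
  have H: "\<forall>a\<in>Pred P A. \<forall>b\<in>Pred P A.
        Meet P A a b \<in> Pred P A \<and> Join P A a b \<in> Pred P A \<and> Imp P A a b \<in> Pred P A \<and>
        (\<forall>c\<in>Pred P A. Le P A c (Meet P A a b) \<longleftrightarrow> Le P A c a \<and> Le P A c b) \<and>
        (\<forall>c\<in>Pred P A. Le P A (Join P A a b) c \<longleftrightarrow> Le P A a c \<and> Le P A b c) \<and>
        (\<forall>c\<in>Pred P A. Le P A c (Imp P A a b) \<longleftrightarrow> Le P A (Meet P A c a) b)"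
    using assms(1) unfolding heyting_fibre_def by (elim conjE) assumption
  note X = bspec[OF bspec[OF H assms(2)] assms(3)]
  show ?thesis using bspec[OF X[THEN conjunct2, THEN conjunct2, THEN conjunct2, THEN conjunct1] assms(4)] .
qed
lemma hf_imp_le: assumes "heyting_fibre P A" "a \<in> Pred P A" "b \<in> Pred P A" "c \<in> Pred P A" shows
   "Le P A c (Imp P A a b) \<longleftrightarrow> Le P A (Meet P A c a) b"
proof -
  have H: "\<forall>a\<in>Pred P A. \<forall>b\<in>Pred P A.
        Meet P A a b \<in> Pred P A \<and> Join P A a b \<in> Pred P A \<and> Imp P A a b \<in> Pred P A \<and>
        (\<forall>c\<in>Pred P A. Le P A c (Meet P A a b) \<longleftrightarrow> Le P A c a \<and> Le P A c b) \<and>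
        (\<forall>c\<in>Pred P A. Le P A (Join P A a b) c \<longleftrightarrow> Le P A a c \<and> Le P A b c) \<and>
        (\<forall>c\<in>Pred P A. Le P A c (Imp P A a b) \<longleftrightarrow> Le P A (Meet P A c a) b)"
    using assms(1) unfolding heyting_fibre_def by (elim conjE) assumption
  note X = bspec[OF bspec[OF H assms(2)] assms(3)]
  show ?thesis using bspec[OF X[THEN conjunct2, THEN conjunct2, THEN conjunct2, THEN conjunct2, THEN conjunct2] assms(4)] .
qed
lemma hfun_re: "heyting_functor C P \<Longrightarrow> a \<in> Pred P (Cod C f) \<Longrightarrow> Re P f a \<in> Pred P (Dom C f)"
  by (simp add: heyting_functor_def Let_def)
lemma hfun_mono: "heyting_functor C P \<Longrightarrow> a \<in> Pred P (Cod C f) \<Longrightarrow> b \<in> Pred P (Cod C f) \<Longrightarrow>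
   Le P (Cod C f) a b \<Longrightarrow> Le P (Dom C f) (Re P f a) (Re P f b)"
  by (simp add: heyting_functor_def Let_def)
lemma hfun_imp: "heyting_functor C P \<Longrightarrow> a \<in> Pred P (Cod C f) \<Longrightarrow> b \<in> Pred P (Cod C f) \<Longrightarrow>
   Re P f (Imp P (Cod C f) a b) = Imp P (Dom C f) (Re P f a) (Re P f b)"
  by (simp add: heyting_functor_def Let_def)
lemma hfun_id: "heyting_functor C P \<Longrightarrow> a \<in> Pred P A \<Longrightarrow> Re P (Id C A) a = a"
  by (simp add: heyting_functor_def)
lemma hfun_comp: "heyting_functor C P \<Longrightarrow> Cod C f = Dom C g \<Longrightarrow> a \<in> Pred P (Cod C g) \<Longrightarrow>
   Re P (Comp C g f) a = Re P f (Re P g a)"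
  by (simp add: heyting_functor_def)
lemma hfun_fib: "heyting_functor C P \<Longrightarrow> heyting_fibre P A"
  by (simp add: heyting_functor_def)
lemma hd_ex: "hyperdoctrine C P \<Longrightarrow> a \<in> Pred P (Dom C f) \<Longrightarrow> Ex P f a \<in> Pred P (Cod C f)"
  by (simp add: hyperdoctrine_def Let_def)
lemma hd_all: "hyperdoctrine C P \<Longrightarrow> a \<in> Pred P (Dom C f) \<Longrightarrow> All P f a \<in> Pred P (Cod C f)"
  by (simp add: hyperdoctrine_def Let_def)
lemma hd_exadj: "hyperdoctrine C P \<Longrightarrow> a \<in> Pred P (Dom C f) \<Longrightarrow> b \<in> Pred P (Cod C f) \<Longrightarrow>
   Le P (Cod C f) (Ex P f a) b \<longleftrightarrow> Le P (Dom C f) a (Re P f b)"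
  by (simp add: hyperdoctrine_def Let_def)
lemma fp_pi1: "has_finite_products C \<Longrightarrow> arr C (Pi1 C A B) (Prod C A B) A"
  unfolding has_finite_products_def by (elim conjE allE)
lemma cat_id: "category C \<Longrightarrow> arr C (Id C A) A A"
  unfolding category_def by (elim conjE allE)
lemma uf_use: "univ_free' C P I \<alpha> \<Longrightarrow> arr C f A I \<Longrightarrow> ex_free C P (Prod C A B) \<beta> \<Longrightarrow>
        Le P A (All P (Pi1 C A B) \<beta>) (Re P f \<alpha>) \<Longrightarrow>
        (\<exists>g. arr C g A B \<and> Le P A (Re P (pair C (Id C A) g) \<beta>) (Re P f \<alpha>))"
  unfolding univ_free'_def by (elim conjE allE impE)
lemma fp_ex1': assumes "has_finite_products C" "arr C f X A" "arr C g X B" shows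
   "(\<exists>!h. arr C h X (Prod C A B) \<and> Comp C (Pi1 C A B) h = f \<and> Comp C (Pi2 C A B) h = g)"
proof -
  have "\<forall>A B. (\<forall>X f g. arr C f X A \<longrightarrow> arr C g X B \<longrightarrow>
           (\<exists>!h. arr C h X (Prod C A B) \<and> Comp C (Pi1 C A B) h = f \<and> Comp C (Pi2 C A B) h = g))"
    using assms(1) unfolding has_finite_products_def by simp
  thus ?thesis using assms(2,3) by simp
qed

theorem theorem6:
  fixes C :: "('o, 'm) cat" and P :: "('o, 'm, 'p) hdoc"
    and A B :: 'o and \<beta>D \<alpha> :: 'p
  assumes "goedel_hyperdoctrine C P"
    and "quantifier_free C P A \<beta>D"
    and "ex_free C P (Prod C A B) \<alpha>"
    and "Le P A (Top P A) (Imp P A (All P (Pi1 C A B) \<alpha>) \<beta>D)"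
  shows "Le P A (Top P A)
           (Ex P (Pi1 C A B) (Imp P (Prod C A B) \<alpha> (Re P (Pi1 C A B) \<beta>D)))"
proof -
  define \<pi> where "\<pi> = Pi1 C A B"
  have H: "hyperdoctrine C P" using assms(1) unfolding goedel_hyperdoctrine_def by (rule conjunct1)
  have CC: "cartesian_closed C" using H unfolding hyperdoctrine_def by (rule conjunct1)
  have HF: "heyting_functor C P" using H unfolding hyperdoctrine_def by (rule conjunct2[THEN conjunct1])
  have cat: "category C" using CC unfolding cartesian_closed_def by (rule conjunct1)
  have fp: "has_finite_products C" using CC unfolding cartesian_closed_def by (rule conjunct2[THEN conjunct1])
  have fibA: "heyting_fibre P A" and fibP: "heyting_fibre P (Prod C A B)"
    using HF by (rule hfun_fib)+
  have \<pi>arr: "arr C \<pi> (Prod C A B) A" unfolding \<pi>_def by (rule fp_pi1[OF fp])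
  hence \<pi>D: "Dom C \<pi> = Prod C A B" and \<pi>C: "Cod C \<pi> = A" unfolding arr_def by auto
  have \<alpha>P: "\<alpha> \<in> Pred P (Prod C A B)" using assms(3) unfolding ex_free_def by (rule conjunct1)
  have \<beta>P: "\<beta>D \<in> Pred P A" using assms(2) unfolding quantifier_free_def ex_free_def by (rule conjunct1[THEN conjunct1])
  have AllP: "All P \<pi> \<alpha> \<in> Pred P A" using hd_all[OF H, of \<alpha> \<pi>] \<alpha>P \<pi>D \<pi>C by simp
  have TopA: "Top P A \<in> Pred P A" using fibA by (rule hf_top)
  have le1: "Le P A (All P \<pi> \<alpha>) \<beta>D"
  proof -
    have m: "Meet P A (Top P A) (All P \<pi> \<alpha>) \<in> Pred P A" using hf_meet[OF fibA TopA AllP] .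
    have 1: "Le P A (Meet P A (Top P A) (All P \<pi> \<alpha>)) \<beta>D"
      using assms(4) hf_imp_le[OF fibA AllP \<beta>P TopA] unfolding \<pi>_def by simp
    have 2: "Le P A (All P \<pi> \<alpha>) (Meet P A (Top P A) (All P \<pi> \<alpha>))"
      using hf_meet_le[OF fibA TopA AllP AllP] hf_le_top[OF fibA AllP] hf_refl[OF fibA AllP] by simp
    show ?thesis using hf_trans[OF fibA AllP m \<beta>P 2 1] .
  qed
  have idA: "arr C (Id C A) A A" by (rule cat_id[OF cat])
  have reid: "Re P (Id C A) \<beta>D = \<beta>D" using hfun_id[OF HF \<beta>P] .
  have "\<exists>g. arr C g A B \<and> Le P A (Re P (pair C (Id C A) g) \<alpha>) (Re P (Id C A) \<beta>D)"
    using uf_use[of C P A \<beta>D "Id C A" A B \<alpha>] assms(2) idA assms(3) le1 reid unfolding quantifier_free_def \<pi>_def by simp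
  then obtain g where g: "arr C g A B"
    and gle: "Le P A (Re P (pair C (Id C A) g) \<alpha>) \<beta>D" using reid by auto
  define p where "p = pair C (Id C A) g"
  have ex1: "\<exists>!h. arr C h A (Prod C A B) \<and> Comp C (Pi1 C A B) h = Id C A \<and> Comp C (Pi2 C A B) h = g"
    by (rule fp_ex1'[OF fp idA g])
  have "Dom C (Id C A) = A" "Cod C (Id C A) = A" "Cod C g = B" using idA g unfolding arr_def by auto
  hence "p = (THE h. arr C h A (Prod C A B) \<and> Comp C (Pi1 C A B) h = Id C A \<and> Comp C (Pi2 C A B) h = g)"
    unfolding p_def pair_def by simp
  hence "arr C p A (Prod C A B) \<and> Comp C \<pi> p = Id C A"
    using theI'[OF ex1] unfolding \<pi>_def by simp
  hence pD: "Dom C p = A" and pC: "Cod C p = Prod C A B" and comp: "Comp C \<pi> p = Id C A"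
    unfolding arr_def by auto
  have reP: "Re P \<pi> \<beta>D \<in> Pred P (Prod C A B)" using hfun_re[OF HF, of \<beta>D \<pi>] \<pi>D \<pi>C \<beta>P by simp
  define \<gamma> where "\<gamma> = Imp P (Prod C A B) \<alpha> (Re P \<pi> \<beta>D)"
  have \<gamma>P: "\<gamma> \<in> Pred P (Prod C A B)" unfolding \<gamma>_def by (rule hf_imp[OF fibP \<alpha>P reP])
  have recomp: "Re P p (Re P \<pi> x) = x" if x: "x \<in> Pred P A" for x
  proof -
    have "Re P (Comp C \<pi> p) x = Re P p (Re P \<pi> x)"
      using hfun_comp[OF HF, of p \<pi> x] pC \<pi>D \<pi>C x by simp
    thus ?thesis using comp hfun_id[OF HF x] by simp
  qed
  have rg: "Re P p \<gamma> = Imp P A (Re P p \<alpha>) \<beta>D"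
    using hfun_imp[OF HF, of \<alpha> p "Re P \<pi> \<beta>D"] pD pC \<alpha>P reP recomp[OF \<beta>P] unfolding \<gamma>_def by simp
  have rpa: "Re P p \<alpha> \<in> Pred P A" using hfun_re[OF HF, of \<alpha> p] pD pC \<alpha>P by simp
  have top_le: "Le P A (Top P A) (Re P p \<gamma>)"
  proof -
    have m: "Meet P A (Top P A) (Re P p \<alpha>) \<in> Pred P A" using hf_meet[OF fibA TopA rpa] .
    have m2: "Le P A (Meet P A (Top P A) (Re P p \<alpha>)) (Re P p \<alpha>)"
      using hf_meet_le[OF fibA TopA rpa m] hf_refl[OF fibA m] by simp
    have "Le P A (Meet P A (Top P A) (Re P p \<alpha>)) \<beta>D"
      using hf_trans[OF fibA m rpa \<beta>P m2] gle unfolding p_def by simp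
    thus ?thesis unfolding rg using hf_imp_le[OF fibA rpa \<beta>P TopA] by simp
  qed
  have exP: "Ex P \<pi> \<gamma> \<in> Pred P A" using hd_ex[OF H, of \<gamma> \<pi>] \<gamma>P \<pi>D \<pi>C by simp
  have unit: "Le P (Prod C A B) \<gamma> (Re P \<pi> (Ex P \<pi> \<gamma>))"
    using hd_exadj[OF H, of \<gamma> \<pi> "Ex P \<pi> \<gamma>"] \<gamma>P exP \<pi>D \<pi>C hf_refl[OF fibA exP] by simp
  have reE: "Re P \<pi> (Ex P \<pi> \<gamma>) \<in> Pred P (Prod C A B)" using hfun_re[OF HF, of "Ex P \<pi> \<gamma>" \<pi>] \<pi>D \<pi>C exP by simp
  have "Le P A (Re P p \<gamma>) (Re P p (Re P \<pi> (Ex P \<pi> \<gamma>)))"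
    using hfun_mono[OF HF, of \<gamma> p "Re P \<pi> (Ex P \<pi> \<gamma>)"] pD pC \<gamma>P reE unit by simp
  hence le2: "Le P A (Re P p \<gamma>) (Ex P \<pi> \<gamma>)" using recomp[OF exP] by simp
  have rgP: "Re P p \<gamma> \<in> Pred P A" using hfun_re[OF HF, of \<gamma> p] pD pC \<gamma>P by simp
  have "Le P A (Top P A) (Ex P \<pi> \<gamma>)" using hf_trans[OF fibA TopA rgP exP top_le le2] .
  thus ?thesis unfolding \<gamma>_def \<pi>_def .
qed

end
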